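(* Let \[ A=\begin{pmatrix} a & \delta & \gamma \\ \bar\delta & b & \varepsilon \\ \bar\gamma & \bar\varepsilon & c\end{pmatrix} \] be a $3\times 3$ Hermitian matrix, where $a,b,c\in\mathbb{R}$ and $\gamma,\delta,\varepsilon\in\mathbb{C}$ are all non-zero. Then $A$ has an eigenvalue $\lambda$ of multiplicity at least $2$ if and only if \[ a-\frac{\bar\delta\gamma}{\varepsilon}=b-\frac{\delta\varepsilon}{\gamma}=c-\frac{\gamma\bar\varepsilon}{\delta}=\lambda\in\mathbb{R} \] (a system of three real equations). Moreover, when this holds, the remaining eigenvalue is $\lambda'=\operatorname{tr}(A)-2\lambda$, so the spectrum is $(\lambda,\lambda,\lambda')$, and $\lambda'>\lambda$ if and only if $\operatorname{Re}(\delta\varepsilon\bar\gamma)>0$.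
   Context: $\operatorname{tr}(A)$ denotes the trace of $A$, and a bar denotes complex conjugation. *)

theory Defs
  imports "HOL-Analysis.Analysis" "Jordan_Normal_Form.Char_Poly"
begin

definition herm3 :: "real \<Rightarrow> real \<Rightarrow> real \<Rightarrow> complex \<Rightarrow> complex \<Rightarrow> complex \<Rightarrow> complex mat" where
  "herm3 a b c \<gamma> \<delta> \<epsilon> = mat_of_rows_list 3
     [[complex_of_real a, \<delta>, \<gamma>],
      [cnj \<delta>, complex_of_real b, \<epsilon>],
      [cnj \<gamma>, cnj \<epsilon>, complex_of_real c]]"

definition mat_trace :: "'a :: comm_ring_1 mat \<Rightarrow> 'a" where
  "mat_trace A = (\<Sum>i<dim_row A. A $$ (i, i))"

end

theory Submission imports Defs begin

lemma det1: assumes "M \<in> carrier_mat 1 1" shows "det M = M $$ (0,0)"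
  using laplace_expansion_row[OF assms, of 0] assms
  by (simp add: cofactor_def mat_delete_def)

lemma det2: assumes "M \<in> carrier_mat 2 2" shows "det M = M $$ (0,0) * M $$ (1,1) - M $$ (0,1) * M $$ (1,0)"
proof -
  have "det M = (\<Sum>j<2. M $$ (0,j) * cofactor M 0 j)" using laplace_expansion_row[OF assms, of 0] by simp
  also have "\<dots> = M $$ (0,0) * cofactor M 0 0 + M $$ (0,1) * cofactor M 0 1"
    by (simp add: numeral_2_eq_2)
  also have "cofactor M 0 0 = M $$ (1,1)" unfolding cofactor_def
    by (subst det1) (use assms in \<open>auto simp: mat_delete_def\<close>)
  also have "cofactor M 0 1 = - M $$ (1,0)" unfolding cofactor_def
    by (subst det1) (use assms in \<open>auto simp: mat_delete_def\<close>)
  finally show ?thesis by (simp add: algebra_simps)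
qed

lemma det3: assumes "M \<in> carrier_mat 3 3" shows "det M =
   M $$ (0,0) * (M $$ (1,1) * M $$ (2,2) - M $$ (1,2) * M $$ (2,1))
 - M $$ (0,1) * (M $$ (1,0) * M $$ (2,2) - M $$ (1,2) * M $$ (2,0))
 + M $$ (0,2) * (M $$ (1,0) * M $$ (2,1) - M $$ (1,1) * M $$ (2,0))"
proof -
  have "det M = (\<Sum>j<3. M $$ (0,j) * cofactor M 0 j)" using laplace_expansion_row[OF assms, of 0] by simp
  also have "\<dots> = M $$ (0,0) * cofactor M 0 0 + M $$ (0,1) * cofactor M 0 1 + M $$ (0,2) * cofactor M 0 2"
    by (simp add: numeral_3_eq_3 numeral_2_eq_2)
  also have "cofactor M 0 0 = M $$ (1,1) * M $$ (2,2) - M $$ (1,2) * M $$ (2,1)" unfolding cofactor_def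
    by (subst det2) (use assms in \<open>auto simp: mat_delete_def numeral_2_eq_2\<close>)
  also have "cofactor M 0 1 = - (M $$ (1,0) * M $$ (2,2) - M $$ (1,2) * M $$ (2,0))" unfolding cofactor_def
    by (subst det2) (use assms in \<open>auto simp: mat_delete_def numeral_2_eq_2\<close>)
  also have "cofactor M 0 2 = M $$ (1,0) * M $$ (2,1) - M $$ (1,1) * M $$ (2,0)" unfolding cofactor_def
    by (subst det2) (use assms in \<open>auto simp: mat_delete_def numeral_2_eq_2\<close>)
  finally show ?thesis by (simp add: algebra_simps)
qed

lemma herm3_carrier: "herm3 a b c g d e \<in> carrier_mat 3 3"
  unfolding herm3_def mat_of_rows_list_def carrier_mat_def by simp

lemma herm3_entry: "i < 3 \<Longrightarrow> j < 3 \<Longrightarrow> herm3 a b c g d e $$ (i,j) = [[complex_of_real a, d, g],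
      [cnj d, complex_of_real b, e],
      [cnj g, cnj e, complex_of_real c]] ! i ! j"
  unfolding herm3_def mat_of_rows_list_def by (subst index_mat) auto
lemma herm3_idx: "herm3 a b c g d e $$ (0,0) = complex_of_real a"
  "herm3 a b c g d e $$ (0,1) = d" "herm3 a b c g d e $$ (0,2) = g"
  "herm3 a b c g d e $$ (1,0) = cnj d" "herm3 a b c g d e $$ (1,1) = complex_of_real b"
  "herm3 a b c g d e $$ (1,2) = e" "herm3 a b c g d e $$ (2,0) = cnj g"
  "herm3 a b c g d e $$ (2,1) = cnj e" "herm3 a b c g d e $$ (2,2) = complex_of_real c"
  by (subst herm3_entry; simp add: numeral_2_eq_2)+

lemma cpm_entry: "i < 3 \<Longrightarrow> j < 3 \<Longrightarrow> char_poly_matrix (herm3 a b c g d e) $$ (i,j) =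
   (if i = j then [:0,1:] else 0) + [: - herm3 a b c g d e $$ (i,j) :]"
  using herm3_carrier[of a b c g d e] unfolding char_poly_matrix_def by auto

lemma cpm_idx: "char_poly_matrix (herm3 a b c g d e) $$ (0,0) = [:- complex_of_real a, 1:]"
  "char_poly_matrix (herm3 a b c g d e) $$ (0,1) = [:-d:]"
  "char_poly_matrix (herm3 a b c g d e) $$ (0,2) = [:-g:]"
  "char_poly_matrix (herm3 a b c g d e) $$ (1,0) = [:-cnj d:]"
  "char_poly_matrix (herm3 a b c g d e) $$ (1,1) = [:- complex_of_real b, 1:]"
  "char_poly_matrix (herm3 a b c g d e) $$ (1,2) = [:-e:]"
  "char_poly_matrix (herm3 a b c g d e) $$ (2,0) = [:-cnj g:]"
  "char_poly_matrix (herm3 a b c g d e) $$ (2,1) = [:-cnj e:]"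
  "char_poly_matrix (herm3 a b c g d e) $$ (2,2) = [:- complex_of_real c, 1:]"
  by (subst cpm_entry; simp add: herm3_idx herm3_idx[unfolded One_nat_def])+

definition "cp0 a b c g d e = - (a*b*c + 2 * Re (d*e*cnj g) - a * (cmod e)^2 - b * (cmod g)^2 - c * (cmod d)^2)"
definition "cp1 a b c g d e = a*b+b*c+c*a - (cmod d)^2 - (cmod g)^2 - (cmod e)^2"

lemma cp0_c: "complex_of_real (cp0 a b c g d e) = - (a*b*c + d*e*cnj g + cnj d * cnj e * g - a * (e * cnj e) - b * (g * cnj g) - c * (d * cnj d))"
proof -
  have h1: "complex_of_real (2 * Re (d*e*cnj g)) = d*e*cnj g + cnj d * cnj e * g"
    using complex_add_cnj[of "d*e*cnj g"] by simp
  show ?thesis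
    unfolding cp0_def
    apply (simp only: of_real_minus of_real_diff of_real_add h1)
    apply (simp only: of_real_mult complex_norm_square add.assoc)
    done
qed

lemma cp1_c: "complex_of_real (cp1 a b c g d e) = a*b+b*c+c*a - d * cnj d - g * cnj g - e * cnj e"
  unfolding cp1_def
  by (simp only: of_real_minus of_real_diff of_real_add of_real_mult complex_norm_square)

lemma gen: fixes a b c d D g G e E :: complex shows
 "[:-a,1:] * ([:-b,1:] * [:-c,1:] - [:-e:] * [:-E:]) - [:-d:] * ([:-D:] * [:-c,1:] - [:-e:] * [:-G:]) + [:-g:] * ([:-D:] * [:-E:] - [:-b,1:] * [:-G:])
  = [: -(a*b*c + d*e*G + D*E*g - a*(e*E) - b*(g*G) - c*(d*D)), a*b+b*c+c*a - d*D - g*G - e*E, -(a+b+c), 1:]"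
  apply (rule poly_eq_poly_eq_iff[THEN iffD1])
  apply (rule ext)
  apply (simp only: poly_mult poly_diff poly_add poly_pCons poly_0 poly_minus)
  apply (simp add: algebra_simps)
  done

lemma CP: "char_poly (herm3 a b c g d e) = [:complex_of_real (cp0 a b c g d e), complex_of_real (cp1 a b c g d e), - complex_of_real (a+b+c), 1:]"
proof -
  have C: "char_poly_matrix (herm3 a b c g d e) \<in> carrier_mat 3 3" using herm3_carrier by simp
  show ?thesis
    unfolding char_poly_def det3[OF C] cpm_idx
    by (subst gen) (simp only: cp0_c cp1_c of_real_add)
qed

lemma key_ident:
  fixes a b c d D g G e E :: complex
  shows "(a*b-d*D)^2+(a*c-g*G)^2+(b*c-e*E)^2+2*((a*e-g*D)*(a*E-d*G))+2*((d*e-g*b)*(D*E-b*G))+2*((d*c-g*E)*(D*c-e*G))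
   = (a*b+b*c+c*a-d*D-g*G-e*E)^2 - 2*(a+b+c)*(a*b*c+d*e*G+g*D*E-a*e*E-b*g*G-c*d*D)"
  by (simp add: algebra_simps power2_eq_square)

lemma norm_sq': "(complex_of_real (cmod z))^2 = z * cnj z"
  by (metis complex_norm_square of_real_power)

lemma rank1_fwd:
  fixes A B C :: real and d g e :: complex
  assumes E2: "of_real A * of_real B + of_real B * of_real C + of_real C * of_real A - d*cnj d - g*cnj g - e*cnj e = 0"
  and Det: "of_real A * of_real B * of_real C + d*e*cnj g + g*cnj d*cnj e - of_real A*e*cnj e - of_real B*g*cnj g - of_real C*d*cnj d = 0"
  shows "of_real A * e = g * cnj d" "d * e = g * of_real B" "d * of_real C = g * cnj e"
proof -
  define z1 where "z1 = of_real A * e - g * cnj d"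
  define z2 where "z2 = d * e - g * of_real B"
  define z3 where "z3 = d * of_real C - g * cnj e"
  define u1 where "u1 = A * B - (cmod d)^2"
  define u2 where "u2 = A * C - (cmod g)^2"
  define u3 where "u3 = B * C - (cmod e)^2"
  have K: "(of_real A * of_real B - d*cnj d)^2 + (of_real A * of_real C - g*cnj g)^2 + (of_real B * of_real C - e*cnj e)^2
     + 2*((of_real A*e-g*cnj d)*(of_real A*cnj e-d*cnj g)) + 2*((d*e-g* of_real B)*(cnj d*cnj e-of_real B*cnj g))
     + 2*((d* of_real C-g*cnj e)*(cnj d* of_real C-e*cnj g)) = 0"
    using key_ident[where a="of_real A" and b="of_real B" and c="of_real C" and d=d and D="cnj d" and g=g and G="cnj g" and e=e and E="cnj e"] unfolding E2 Det
    by (simp only: power_zero_numeral mult_zero_right diff_zero)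
  have c1: "cnj z1 = of_real A*cnj e-d*cnj g" unfolding z1_def by simp
  have c2: "cnj z2 = cnj d*cnj e-of_real B*cnj g" unfolding z2_def by simp
  have c3: "cnj z3 = cnj d* of_real C-e*cnj g" unfolding z3_def by simp
  have "complex_of_real (u1^2 + u2^2 + u3^2 + 2*(cmod z1)^2 + 2*(cmod z2)^2 + 2*(cmod z3)^2)
      = (of_real A * of_real B - d*cnj d)^2 + (of_real A * of_real C - g*cnj g)^2 + (of_real B * of_real C - e*cnj e)^2
     + 2*(z1 * cnj z1) + 2*(z2 * cnj z2) + 2*(z3 * cnj z3)"
    unfolding u1_def u2_def u3_def
    by (simp only: of_real_add of_real_mult of_real_power of_real_diff norm_sq' of_real_numeral)
  also have "\<dots> = 0" using K unfolding c1 c2 c3 unfolding z1_def z2_def z3_def .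
  finally have "u1^2 + u2^2 + u3^2 + 2*(cmod z1)^2 + 2*(cmod z2)^2 + 2*(cmod z3)^2 = 0"
    by (simp only: of_real_eq_0_iff)
  moreover have "u1^2 \<ge> 0" "u2^2 \<ge> 0" "u3^2 \<ge> 0" "(cmod z1)^2 \<ge> 0" "(cmod z2)^2 \<ge> 0" "(cmod z3)^2 \<ge> 0"
    by simp_all
  ultimately have "(cmod z1)^2 = 0" "(cmod z2)^2 = 0" "(cmod z3)^2 = 0" by linarith+
  then have "z1 = 0" "z2 = 0" "z3 = 0" by simp_all
  then show "of_real A * e = g * cnj d" "d * e = g * of_real B" "d * of_real C = g * cnj e"
    unfolding z1_def z2_def z3_def by simp_all
qed

lemma rank1_rev:
  fixes A B C :: real and d g e :: complex
  assumes nz: "d \<noteq> 0" "g \<noteq> 0" "e \<noteq> 0"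
  and K1: "of_real A * e = cnj d * g" and K2: "of_real B * g = d * e" and K3: "of_real C * d = g * cnj e"
  shows "of_real A * of_real B + of_real B * of_real C + of_real C * of_real A - d*cnj d - g*cnj g - e*cnj e = 0"
  and "of_real A * of_real B * of_real C + d*e*cnj g + g*cnj d*cnj e - of_real A*e*cnj e - of_real B*g*cnj g - of_real C*d*cnj d = 0"
proof -
  have K1c: "of_real A * cnj e = d * cnj g" using arg_cong[OF K1, of cnj] by simp
  have K3c: "of_real C * cnj d = cnj g * e" using arg_cong[OF K3, of cnj] by simp
  have "(of_real A * of_real B) * (e * g) = (d * cnj d) * (e * g)"
  proof -
    have "(of_real A * of_real B) * (e * g) = (of_real A * e) * (of_real B * g)" by (simp add: algebra_simps)
    also have "\<dots> = (d * cnj d) * (e * g)" unfolding K1 K2 by (simp add: algebra_simps)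
    finally show ?thesis .
  qed
  then have AB: "of_real A * of_real B = d * cnj d" using nz by simp
  have "(of_real B * of_real C) * (g * d) = (e * cnj e) * (g * d)"
  proof -
    have "(of_real B * of_real C) * (g * d) = (of_real B * g) * (of_real C * d)" by (simp add: algebra_simps)
    also have "\<dots> = (e * cnj e) * (g * d)" unfolding K3 K2 by (simp add: algebra_simps)
    finally show ?thesis .
  qed
  then have BC: "of_real B * of_real C = e * cnj e" using nz by simp
  have "(of_real C * of_real A) * (d * cnj e) = (g * cnj g) * (d * cnj e)"
  proof -
    have "(of_real C * of_real A) * (d * cnj e) = (of_real C * d) * (of_real A * cnj e)" by (simp add: algebra_simps)
    also have "\<dots> = (g * cnj g) * (d * cnj e)" unfolding K3 K1c by (simp add: algebra_simps)
    finally show ?thesis .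
  qed
  then have CA: "of_real C * of_real A = g * cnj g" using nz by simp
  show "of_real A * of_real B + of_real B * of_real C + of_real C * of_real A - d*cnj d - g*cnj g - e*cnj e = 0"
    using AB BC CA by simp
  have t1: "of_real A*e*cnj e = cnj d * g * cnj e" using K1 by simp
  have t2: "of_real B*g*cnj g = d * e * cnj g" using K2 by simp
  have t3: "of_real C*d*cnj d = g * cnj e * cnj d" using K3 by simp
  have t4: "of_real A * of_real B * of_real C = cnj d * g * cnj e"
    using AB K3 by (metis mult.assoc mult.commute)
  show "of_real A * of_real B * of_real C + d*e*cnj g + g*cnj d*cnj e - of_real A*e*cnj e - of_real B*g*cnj g - of_real C*d*cnj d = 0"
    unfolding t1 t2 t3 t4 by (simp add: algebra_simps)
qed

lemma prod3: fixes l m :: complex shows "[:-l,1:]^2 * [:-m,1:] = [:-(l^2*m), l^2+2*l*m, -(2*l+m), 1:]"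
  apply (rule poly_eq_poly_eq_iff[THEN iffD1])
  apply (rule ext)
  apply (simp add: algebra_simps power2_eq_square)
  done

lemma prod3q: fixes l q0 q1 :: complex shows "[:-l,1:]^2 * [:q0,q1:] = [:l^2*q0, l^2*q1 - 2*l*q0, q0 - 2*l*q1, q1:]"
  apply (rule poly_eq_poly_eq_iff[THEN iffD1])
  apply (rule ext)
  apply (simp add: algebra_simps power2_eq_square)
  done

lemma deg1: fixes q :: "complex poly" assumes "degree q \<le> 1" shows "q = [:coeff q 0, coeff q 1:]"
proof (rule poly_eqI)
  fix n show "coeff q n = coeff [:coeff q 0, coeff q 1:] n"
    using assms by (cases n; cases "n - 1") (auto simp: coeff_eq_0)
qed

lemma cp_shift:
  "complex_of_real (a - x) * complex_of_real (b - x) + complex_of_real (b - x) * complex_of_real (c - x) + complex_of_real (c - x) * complex_of_real (a - x) - d*cnj d - g*cnj g - e*cnj e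
   = complex_of_real (cp1 a b c g d e) - 2* complex_of_real x * complex_of_real (a+b+c) + 3 * (complex_of_real x)^2"
  "complex_of_real (a - x) * complex_of_real (b - x) * complex_of_real (c - x) + d*e*cnj g + g*cnj d*cnj e - complex_of_real (a - x)*e*cnj e - complex_of_real (b - x)*g*cnj g - complex_of_real (c - x)*d*cnj d
   = -(complex_of_real (cp0 a b c g d e) + complex_of_real x * complex_of_real (cp1 a b c g d e) - (complex_of_real x)^2 * complex_of_real (a+b+c) + (complex_of_real x)^3)"
  unfolding cp0_c cp1_c by (simp_all add: algebra_simps power2_eq_square power3_eq_cube)

lemma lin3: assumes "X - T + U = (0::complex)" shows "X = T - U"
proof -
  have "X = (X - T + U) + (T - U)" by (simp add: algebra_simps)
  then show ?thesis using assms by simp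
qed

lemma lin4: assumes "-(P + Q - R + T) = (0::complex)" shows "P = - (Q - R + T)"
proof -
  have "P = (P + Q - R + T) - (Q - R + T)" by (simp add: algebra_simps)
  also have "P + Q - R + T = 0" using assms by (simp only: neg_equal_0_iff_equal)
  finally show ?thesis by simp
qed

lemma rev_poly:
  fixes a b c x :: real and d g e :: complex
  assumes nz: "d \<noteq> 0" "g \<noteq> 0" "e \<noteq> 0"
  and K1: "complex_of_real (a - x) * e = cnj d * g" and K2: "complex_of_real (b - x) * g = d * e" and K3: "complex_of_real (c - x) * d = g * cnj e"
  shows "char_poly (herm3 a b c g d e) = [:-complex_of_real x,1:]^2 * [:-(complex_of_real (a+b+c) - 2*complex_of_real x),1:]"
proof -
  note R = rank1_rev[OF nz K1 K2 K3]
  define S where "S = complex_of_real (a+b+c)"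
  define X where "X = complex_of_real x"
  have h1: "complex_of_real (cp1 a b c g d e) = 2*X*S - 3 * X^2"
    unfolding X_def S_def by (rule lin3) (use R(1) cp_shift(1)[where a=a and b=b and c=c and x=x and d=d and g=g and e=e] in simp)
  have Z: "-(complex_of_real (cp0 a b c g d e) + X * complex_of_real (cp1 a b c g d e) - X^2 * S + X^3) = 0"
    unfolding X_def S_def using R(2) cp_shift(2)[where a=a and b=b and c=c and x=x and d=d and g=g and e=e] by metis
  have h0: "complex_of_real (cp0 a b c g d e) = - (X * complex_of_real (cp1 a b c g d e) - X^2 * S + X^3)"
    using lin4[OF Z] .
  have g0: "complex_of_real (cp0 a b c g d e) = - (X^2 * (S - 2*X))"
    unfolding h0 h1 by (simp add: algebra_simps power2_eq_square power3_eq_cube)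
  have g1: "complex_of_real (cp1 a b c g d e) = X^2 + 2*X*(S - 2*X)"
    unfolding h1 by (simp add: algebra_simps power2_eq_square)
  have g2: "- S = - (2*X + (S - 2*X))" by simp
  show ?thesis unfolding CP prod3 S_def[symmetric] X_def[symmetric] g0 g1 g2 ..
qed

lemma poly_cnj3: "poly [:complex_of_real r0, complex_of_real r1, - complex_of_real r2, 1:] (cnj z) = cnj (poly [:complex_of_real r0, complex_of_real r1, - complex_of_real r2, 1:] z)"
  by simp

lemma alg1: "(X^2*1 - 2*X*q0) - 2*X*(2*X - q0) + 3*X^2 = (0::complex)"
  by (simp add: algebra_simps power2_eq_square)

lemma alg2: "-(X^2*q0 + X*(X^2*1 - 2*X*q0) - X^2*(2*X - q0) + X^3) = (0::complex)"
  by (simp add: algebra_simps power2_eq_square power3_eq_cube)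

lemma fwd:
  fixes a b c :: real and d g e l :: complex
  assumes nz: "d \<noteq> 0" "g \<noteq> 0" "e \<noteq> 0"
  and dv: "[:-l,1:]^2 dvd char_poly (herm3 a b c g d e)"
  shows "\<exists>x. l = complex_of_real x \<and> complex_of_real (a - x) * e = g * cnj d \<and> d * e = g * complex_of_real (b - x) \<and> d * complex_of_real (c - x) = g * cnj e"
proof -
  let ?P = "char_poly (herm3 a b c g d e)"
  obtain q where Pq: "?P = [:-l,1:]^2 * q" using dv by (rule dvdE)
  have "?P \<noteq> 0" unfolding CP by simp
  then have qnz: "q \<noteq> 0" using Pq by auto
  have "degree ?P = 3" unfolding CP by simp
  moreover have "degree ?P = 2 + degree q" unfolding Pq
    by (subst degree_mult_eq) (use qnz in \<open>auto simp: degree_linear_power\<close>)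
  ultimately have "degree q \<le> 1" by simp
  then have qq: "q = [:coeff q 0, coeff q 1:]" by (rule deg1)
  define q0 where "q0 = coeff q 0"
  define q1 where "q1 = coeff q 1"
  have qe: "q = [:q0,q1:]" using qq unfolding q0_def q1_def .
  have E: "[:complex_of_real (cp0 a b c g d e), complex_of_real (cp1 a b c g d e), - complex_of_real (a+b+c), 1:] = [:l^2*q0, l^2*q1 - 2*l*q0, q0 - 2*l*q1, q1:]"
  proof -
    have "?P = [:-l,1:]^2 * [:q0,q1:]" using Pq by (simp only: qe)
    then show ?thesis unfolding CP prod3q .
  qed
  then have e0: "complex_of_real (cp0 a b c g d e) = l^2*q0" and e1: "complex_of_real (cp1 a b c g d e) = l^2*q1 - 2*l*q0"
    and e2: "- complex_of_real (a+b+c) = q0 - 2*l*q1" and e3: "q1 = 1" by simp_all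
  have "poly ?P (cnj l) = cnj (poly ?P l)" unfolding CP by (rule poly_cnj3)
  also have "poly ?P l = 0" unfolding Pq by simp
  finally have "poly ?P (cnj l) = 0" by simp
  then have "poly ([:-l,1:]^2 * [:q0,1:]) (cnj l) = 0" using Pq unfolding qe e3 by simp
  then have "poly ([:-l,1:]^2) (cnj l) = 0 \<or> poly [:q0,1:] (cnj l) = 0" by (simp only: poly_mult mult_eq_0_iff)
  then have "cnj l - l = 0 \<or> q0 + cnj l = 0" by auto
  then have "cnj l = l \<or> cnj l = - q0" by (auto simp: add_eq_0_iff)
  then have "Im l = 0"
  proof
    assume "cnj l = l"
    then have "Im (cnj l) = Im l" by simp
    then show ?thesis by simp
  next
    assume "cnj l = - q0"
    then have "q0 = - cnj l" by simp
    with e2 e3 have "complex_of_real (a+b+c) = 2*l + cnj l" by (simp add: algebra_simps)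
    then have "Im (complex_of_real (a+b+c)) = Im (2*l + cnj l)" by simp
    then show ?thesis by simp
  qed
  define x where "x = Re l"
  have lx: "l = complex_of_real x" unfolding x_def using \<open>Im l = 0\<close> by (simp add: complex_eq_iff)
  have S: "complex_of_real (a+b+c) = 2 * complex_of_real x - q0" using e2 e3 lx by (metis minus_diff_eq minus_minus mult_1_right)
  have E2: "complex_of_real (a - x) * complex_of_real (b - x) + complex_of_real (b - x) * complex_of_real (c - x) + complex_of_real (c - x) * complex_of_real (a - x) - d*cnj d - g*cnj g - e*cnj e = 0"
    unfolding cp_shift(1) e1 e3 S lx by (rule alg1)
  have D: "complex_of_real (a - x) * complex_of_real (b - x) * complex_of_real (c - x) + d*e*cnj g + g*cnj d*cnj e - complex_of_real (a - x)*e*cnj e - complex_of_real (b - x)*g*cnj g - complex_of_real (c - x)*d*cnj d = 0"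
    unfolding cp_shift(2) e1 e0 e3 S lx by (rule alg2)
  note F = rank1_fwd[OF E2 D]
  show ?thesis
    by (rule exI[of _ x], intro conjI, fact lx, fact F(1), fact F(2), fact F(3))
qed

lemma divK: assumes "e \<noteq> 0"
  shows "(complex_of_real a - X / e = complex_of_real x) \<longleftrightarrow> (complex_of_real (a - x) * e = X)"
proof -
  have "(complex_of_real a - X / e = complex_of_real x) \<longleftrightarrow> (complex_of_real a - complex_of_real x = X / e)"
    by (auto simp: algebra_simps)
  also have "\<dots> \<longleftrightarrow> (complex_of_real a - complex_of_real x) * e = X"
    using assms by (simp add: eq_divide_eq)
  finally show ?thesis by simp
qed

lemma Re_helper: assumes "complex_of_real r * (z * cnj z) = w" shows "r * (cmod z)^2 = Re w"
proof -
  have "w = complex_of_real (r * (cmod z)^2)" unfolding assms[symmetric] of_real_mult complex_norm_square ..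
  then show ?thesis by simp
qed

lemma sign_helper: fixes r n R :: real assumes "r * n = R" "n > 0" shows "(0 < r \<longleftrightarrow> 0 < R) \<and> (r \<le> 0 \<longleftrightarrow> R \<le> 0)"
proof -
  have i1: "0 < r \<Longrightarrow> 0 < R" using assms by (metis mult_pos_pos)
  have i2: "0 < R \<Longrightarrow> 0 < r" using assms by (metis zero_less_mult_pos2)
  show ?thesis using i1 i2 by force
qed

theorem mainTheorem1:
  fixes a b c :: real and \<gamma> \<delta> \<epsilon> :: complex
  assumes "\<gamma> \<noteq> 0" "\<delta> \<noteq> 0" "\<epsilon> \<noteq> 0"
  defines "A \<equiv> herm3 a b c \<gamma> \<delta> \<epsilon>"
  shows "\<forall>l :: complex.
     ((eigenvalue A l \<and> order l (char_poly A) \<ge> 2) \<longleftrightarrow>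
      (complex_of_real a - cnj \<delta> * \<gamma> / \<epsilon> = l \<and>
       complex_of_real b - \<delta> * \<epsilon> / \<gamma> = l \<and>
       complex_of_real c - \<gamma> * cnj \<epsilon> / \<delta> = l \<and> l \<in> \<real>))
   \<and> (\<forall>l :: complex.
       (complex_of_real a - cnj \<delta> * \<gamma> / \<epsilon> = l \<and>
        complex_of_real b - \<delta> * \<epsilon> / \<gamma> = l \<and>
        complex_of_real c - \<gamma> * cnj \<epsilon> / \<delta> = l \<and> l \<in> \<real>) \<longrightarrow>
       (let l' = mat_trace A - 2 * l in
          char_poly A = [:- l, 1:] ^ 2 * [:- l', 1:] \<and>
          l' \<in> \<real> \<and>
          (Re l' > Re l \<longleftrightarrow> Re (\<delta> * \<epsilon> * cnj \<gamma>) > 0)))"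
proof -
  have Ac: "A \<in> carrier_mat 3 3" unfolding A_def by (rule herm3_carrier)
  have nzP: "char_poly A \<noteq> 0" unfolding A_def CP by simp
  have dimA: "dim_row A = 3" using Ac by simp
  have set3: "{..<3::nat} = {0,1,2}" by auto
  have tr: "mat_trace A = complex_of_real (a+b+c)"
  proof -
    have "mat_trace A = A $$ (0,0) + (A $$ (1,1) + A $$ (2,2))"
      unfolding mat_trace_def dimA set3 by simp
    then show ?thesis unfolding A_def herm3_idx by simp
  qed
  have ev: "eigenvalue A l \<longleftrightarrow> poly (char_poly A) l = 0" for l
    by (rule eigenvalue_root_char_poly[OF Ac])
  have ord: "(2 \<le> order l (char_poly A)) \<longleftrightarrow> [:-l,1:]^2 dvd char_poly A" for l
    using order_divides[of l 2 "char_poly A"] nzP by simp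
  have EQx: "(complex_of_real a - cnj \<delta> * \<gamma> / \<epsilon> = complex_of_real x \<and>
       complex_of_real b - \<delta> * \<epsilon> / \<gamma> = complex_of_real x \<and>
       complex_of_real c - \<gamma> * cnj \<epsilon> / \<delta> = complex_of_real x)
     \<longleftrightarrow> (complex_of_real (a - x) * \<epsilon> = cnj \<delta> * \<gamma> \<and> complex_of_real (b - x) * \<gamma> = \<delta> * \<epsilon>
          \<and> complex_of_real (c - x) * \<delta> = \<gamma> * cnj \<epsilon>)" for x
    using divK[OF assms(3)] divK[OF assms(1)] divK[OF assms(2)] by metis
  have realx: "l \<in> \<real> \<Longrightarrow> l = complex_of_real (Re l)" for l
    by (simp add: complex_eq_iff)
  have part1: "(eigenvalue A l \<and> order l (char_poly A) \<ge> 2) \<longleftrightarrow>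
      (complex_of_real a - cnj \<delta> * \<gamma> / \<epsilon> = l \<and>
       complex_of_real b - \<delta> * \<epsilon> / \<gamma> = l \<and>
       complex_of_real c - \<gamma> * cnj \<epsilon> / \<delta> = l \<and> l \<in> \<real>)" for l
  proof
    assume H: "eigenvalue A l \<and> order l (char_poly A) \<ge> 2"
    then have "[:-l,1:]^2 dvd char_poly (herm3 a b c \<gamma> \<delta> \<epsilon>)" using ord unfolding A_def by simp
    from fwd[OF assms(2) assms(1) assms(3) this] obtain x where lx: "l = complex_of_real x"
      and F1: "complex_of_real (a - x) * \<epsilon> = \<gamma> * cnj \<delta>" and F2: "\<delta> * \<epsilon> = \<gamma> * complex_of_real (b - x)"
      and F3: "\<delta> * complex_of_real (c - x) = \<gamma> * cnj \<epsilon>" by blast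
    have K: "complex_of_real (a - x) * \<epsilon> = cnj \<delta> * \<gamma> \<and> complex_of_real (b - x) * \<gamma> = \<delta> * \<epsilon>
          \<and> complex_of_real (c - x) * \<delta> = \<gamma> * cnj \<epsilon>"
      using F1 F2 F3 by (simp add: mult.commute)
    show "complex_of_real a - cnj \<delta> * \<gamma> / \<epsilon> = l \<and>
       complex_of_real b - \<delta> * \<epsilon> / \<gamma> = l \<and>
       complex_of_real c - \<gamma> * cnj \<epsilon> / \<delta> = l \<and> l \<in> \<real>"
      using EQx[of x] K lx by simp
  next
    assume H: "complex_of_real a - cnj \<delta> * \<gamma> / \<epsilon> = l \<and>
       complex_of_real b - \<delta> * \<epsilon> / \<gamma> = l \<and>
       complex_of_real c - \<gamma> * cnj \<epsilon> / \<delta> = l \<and> l \<in> \<real>"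
    define x where "x = Re l"
    have lx: "l = complex_of_real x" unfolding x_def using H realx by blast
    have K: "complex_of_real (a - x) * \<epsilon> = cnj \<delta> * \<gamma> \<and> complex_of_real (b - x) * \<gamma> = \<delta> * \<epsilon>
          \<and> complex_of_real (c - x) * \<delta> = \<gamma> * cnj \<epsilon>"
      using EQx[of x] H lx by simp
    have CPf: "char_poly A = [:-l,1:]^2 * [:-(complex_of_real (a+b+c) - 2*complex_of_real x),1:]"
      unfolding A_def lx using rev_poly[OF assms(2) assms(1) assms(3)] K by blast
    have "[:-l,1:]^2 dvd char_poly A" unfolding CPf by (rule dvd_triv_left)
    then have "order l (char_poly A) \<ge> 2" using ord by simp
    moreover have "poly (char_poly A) l = 0" unfolding CPf by simp
    ultimately show "eigenvalue A l \<and> order l (char_poly A) \<ge> 2" using ev by simp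
  qed
  have part2: "let l' = mat_trace A - 2 * l in
          char_poly A = [:- l, 1:] ^ 2 * [:- l', 1:] \<and>
          l' \<in> \<real> \<and>
          (Re l' > Re l \<longleftrightarrow> Re (\<delta> * \<epsilon> * cnj \<gamma>) > 0)"
    if H: "complex_of_real a - cnj \<delta> * \<gamma> / \<epsilon> = l \<and>
        complex_of_real b - \<delta> * \<epsilon> / \<gamma> = l \<and>
        complex_of_real c - \<gamma> * cnj \<epsilon> / \<delta> = l \<and> l \<in> \<real>" for l
  proof -
    define x where "x = Re l"
    have lx: "l = complex_of_real x" unfolding x_def using H realx by blast
    have K1: "complex_of_real (a - x) * \<epsilon> = cnj \<delta> * \<gamma>"
      and K2: "complex_of_real (b - x) * \<gamma> = \<delta> * \<epsilon>"
      and K3: "complex_of_real (c - x) * \<delta> = \<gamma> * cnj \<epsilon>"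
      using EQx[of x] H lx by simp_all
    have CPf: "char_poly A = [:-l,1:]^2 * [:-(complex_of_real (a+b+c) - 2*complex_of_real x),1:]"
      unfolding A_def lx using rev_poly[OF assms(2) assms(1) assms(3) K1 K2 K3] .
    have l'e: "mat_trace A - 2 * l = complex_of_real (a+b+c - 2*x)" unfolding tr lx by simp
    have K1c: "complex_of_real (a - x) * cnj \<epsilon> = \<delta> * cnj \<gamma>" using arg_cong[OF K1, of cnj] by simp
    have K3c: "complex_of_real (c - x) * cnj \<delta> = cnj \<gamma> * \<epsilon>" using arg_cong[OF K3, of cnj] by simp
    have ra: "complex_of_real (a - x) * (\<epsilon> * cnj \<epsilon>) = \<delta> * \<epsilon> * cnj \<gamma>"
    proof -
      have "complex_of_real (a - x) * (\<epsilon> * cnj \<epsilon>) = (complex_of_real (a - x) * cnj \<epsilon>) * \<epsilon>" by (simp only: ac_simps)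
      also have "\<dots> = \<delta> * cnj \<gamma> * \<epsilon>" unfolding K1c ..
      finally show ?thesis by (simp only: ac_simps)
    qed
    have rb: "complex_of_real (b - x) * (\<gamma> * cnj \<gamma>) = \<delta> * \<epsilon> * cnj \<gamma>"
    proof -
      have "complex_of_real (b - x) * (\<gamma> * cnj \<gamma>) = (complex_of_real (b - x) * \<gamma>) * cnj \<gamma>" by (simp only: ac_simps)
      also have "\<dots> = \<delta> * \<epsilon> * cnj \<gamma>" unfolding K2 ..
      finally show ?thesis .
    qed
    have rc: "complex_of_real (c - x) * (\<delta> * cnj \<delta>) = \<delta> * \<epsilon> * cnj \<gamma>"
    proof -
      have "complex_of_real (c - x) * (\<delta> * cnj \<delta>) = (complex_of_real (c - x) * cnj \<delta>) * \<delta>" by (simp only: ac_simps)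
      also have "\<dots> = cnj \<gamma> * \<epsilon> * \<delta>" unfolding K3c ..
      finally show ?thesis by (simp only: ac_simps)
    qed
    define R where "R = Re (\<delta> * \<epsilon> * cnj \<gamma>)"
    have sa: "(0 < a - x \<longleftrightarrow> 0 < R) \<and> (a - x \<le> 0 \<longleftrightarrow> R \<le> 0)"
      unfolding R_def by (rule sign_helper[OF Re_helper[OF ra]]) (use assms in simp)
    have sb: "(0 < b - x \<longleftrightarrow> 0 < R) \<and> (b - x \<le> 0 \<longleftrightarrow> R \<le> 0)"
      unfolding R_def by (rule sign_helper[OF Re_helper[OF rb]]) (use assms in simp)
    have sc: "(0 < c - x \<longleftrightarrow> 0 < R) \<and> (c - x \<le> 0 \<longleftrightarrow> R \<le> 0)"
      unfolding R_def by (rule sign_helper[OF Re_helper[OF rc]]) (use assms in simp)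
    have iff: "(x < a+b+c - 2*x) \<longleftrightarrow> 0 < R"
    proof (cases "0 < R")
      case True then show ?thesis using sa sb sc by linarith
    next
      case False then show ?thesis using sa sb sc by linarith
    qed
    show ?thesis unfolding Let_def l'e
      using CPf l'e iff lx unfolding R_def by simp
  qed
  show ?thesis using part1 part2 by blast
qed

end
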